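(* Let $$y=\frac{32s(s+1)(5s^2+6s-3)}{(s^2+2s+5)(3s^2+2s+3)^2},\qquad t=\frac{1024s^3(s+1)^2}{(s^2+6s+1)(3s^2+2s+3)^3}.$$ Then $y(t)$ is a solution of $\mathrm{P}_{\mathrm{VI}}$ with parameters $(\theta_1,\theta_2,\theta_3,\theta_4)=(1/2,1/4,1/2,3/4)$.
   Context: $\mathrm{P}_{\mathrm{VI}}$ is the equation $$\frac{d^2y}{dt^2}=\frac12\Big(\frac1y+\frac1{y-1}+\frac1{y-t}\Big)\Big(\frac{dy}{dt}\Big)^2-\Big(\frac1t+\frac1{t-1}+\frac1{y-t}\Big)\frac{dy}{dt}+\frac{y(y-1)(y-t)}{t^2(t-1)^2}\Big(\alpha+\beta\frac{t}{y^2}+\gamma\frac{t-1}{(y-1)^2}+\delta\frac{t(t-1)}{(y-t)^2}\Big),$$ with $\alpha=(\theta_4-1)^2/2$, $\beta=-\theta_1^2/2$, $\gamma=\theta_3^2/2$, $\delta=(1-\theta_2^2)/2$. When $y,t$ are given as rational functions of a parameter on a curve, derivatives with respect to $t$ are computed via the chain rule. *)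

theory Defs
  imports "HOL-Analysis.Analysis"
begin

definition PVI_rhs :: "complex \<Rightarrow> complex \<Rightarrow> complex \<Rightarrow> complex \<Rightarrow> complex
    \<Rightarrow> complex \<Rightarrow> complex \<Rightarrow> complex" where
  "PVI_rhs th1 th2 th3 th4 t y y1 =
     (let al = (th4 - 1)^2 / 2; be = -(th1^2) / 2; ga = th3^2 / 2; de = (1 - th2^2) / 2 in
      1/2 * (1/y + 1/(y - 1) + 1/(y - t)) * y1^2
      - (1/t + 1/(t - 1) + 1/(y - t)) * y1
      + y * (y - 1) * (y - t) / (t^2 * (t - 1)^2)
        * (al + be * t / y^2 + ga * (t - 1) / (y - 1)^2 + de * t * (t - 1) / (y - t)^2))"

text \<open>A curve (T s, Y s) parametrised by s solves P_VI at parameter value s: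
  derivatives with respect to t are computed by the chain rule,
  dy/dt = Y'(s)/T'(s), d^2y/dt^2 = (d/ds (dy/dt))/T'(s).\<close>
definition PVI_param_holds_at ::
  "complex \<Rightarrow> complex \<Rightarrow> complex \<Rightarrow> complex \<Rightarrow> (complex \<Rightarrow> complex) \<Rightarrow> (complex \<Rightarrow> complex)
    \<Rightarrow> complex \<Rightarrow> bool" where
  "PVI_param_holds_at th1 th2 th3 th4 T Y s \<longleftrightarrow>
     (let y1 = (\<lambda>u. deriv Y u / deriv T u);
          y2 = deriv y1 s / deriv T s
      in y2 = PVI_rhs th1 th2 th3 th4 (T s) (Y s) (y1 s))"

definition Ysol :: "complex \<Rightarrow> complex" where
  "Ysol s = 32 * s * (s + 1) * (5 * s^2 + 6 * s - 3) / ((s^2 + 2 * s + 5) * (3 * s^2 + 2 * s + 3)^2)"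

definition Tsol :: "complex \<Rightarrow> complex" where
  "Tsol s = 1024 * s^3 * (s + 1)^2 / ((s^2 + 6 * s + 1) * (3 * s^2 + 2 * s + 3)^3)"

end

theory Submission
  imports Defs
begin


definition "pA u = u^2 + 2 * u + (5::complex)"
definition "pB u = 3 * u^2 + 2 * u + (3::complex)"
definition "pC u = u^2 + 6 * u + (1::complex)"
definition "pE u = 5 * u^2 + 6 * u - (3::complex)"
definition "q1 u = u + (1::complex)"
definition "qm u = u - (1::complex)"
definition "q3 u = u + (3::complex)"
definition "ql u = 3 * u + (1::complex)"
definition "Q6 u = (15 - 45 * u - 212 * u^2 - 106 * u^3 + 23 * u^4 + 39 * u^5 + 30 * u^6::complex)"

lemma atom_derivs[derivative_intros]:
  "(pA has_field_derivative (2 * u + 2)) (at u)"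
  "(pB has_field_derivative (6 * u + 2)) (at u)"
  "(pC has_field_derivative (2 * u + 6)) (at u)"
  "(pE has_field_derivative (10 * u + 6)) (at u)"
  "(q1 has_field_derivative 1) (at u)"
  "(qm has_field_derivative 1) (at u)"
  "(q3 has_field_derivative 1) (at u)"
  "(ql has_field_derivative 3) (at u)"
  "(Q6 has_field_derivative (- 45 - 424 * u - 318 * u^2 + 92 * u^3 + 195 * u^4 + 180 * u^5)) (at u)"
  unfolding pA_def[abs_def] pB_def[abs_def] pC_def[abs_def] pE_def[abs_def] q1_def[abs_def] qm_def[abs_def] q3_def[abs_def] ql_def[abs_def] Q6_def[abs_def]
  by (rule DERIV_cong, (rule derivative_intros)+, simp add: algebra_simps)+

definition "YPf u = (-32) * q3 u * Q6 u / (pA u^2 * pB u^3)"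
definition "TPf u = (-1024) * u^2 * q1 u * qm u * q3 u^2 * ql u^2 / (pB u^4 * pC u^2)"

lemma Ysol_eq: "Ysol = (\<lambda>u. 32 * u * q1 u * pE u / (pA u * pB u^2))"
  by (rule ext) (simp add: Ysol_def q1_def pE_def pA_def pB_def)
lemma Tsol_eq: "Tsol = (\<lambda>u. 1024 * u^3 * q1 u^2 / (pC u * pB u^3))"
  by (rule ext) (simp add: Tsol_def q1_def pC_def pB_def mult.commute)

definition "pF u = 3 * u^2 - 6 * u - (5::complex)"
definition "pH u = 5 * u^2 + 2 * u + (1::complex)"
definition "Y1f u = (1/32) * pB u * pC u^2 * Q6 u / (u^2 * q1 u * qm u * q3 u * ql u^2 * pA u^2)"
definition "Y1d u = (1/16) * pC u * (675 + 4140 * u + 13335 * u^2 + 20349 * u^3 + 66834 * u^4 + 274698 * u^5 + 537789 * u^6 + 487863 * u^7 + 224330 * u^8 + 92280 * u^9 + 108993 * u^10 + 128763 * u^11 + 93402 * u^12 + 35442 * u^13 + 7179 * u^14 + 945 * u^15 + 135 * u^16) / (u^3 * q1 u^2 * qm u^2 * q3 u^2 * ql u^3 * pA u^3)"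


lemma dY: assumes "pA u \<noteq> 0" "pB u \<noteq> 0"
  shows "(Ysol has_field_derivative YPf u) (at u)"
  unfolding Ysol_eq
  apply (rule DERIV_cong)
   apply (rule derivative_intros | simp add: assms)+
  apply (unfold YPf_def)
  apply (simp add: field_simps assms)
  apply (unfold pA_def pB_def pE_def q1_def q3_def Q6_def)
  apply algebra
  done

lemma dT: assumes "pC u \<noteq> 0" "pB u \<noteq> 0"
  shows "(Tsol has_field_derivative TPf u) (at u)"
  unfolding Tsol_eq
  apply (rule DERIV_cong)
   apply (rule derivative_intros | simp add: assms)+
  apply (unfold TPf_def)
  apply (simp add: field_simps assms)
  apply (unfold pC_def pB_def q1_def qm_def q3_def ql_def)
  apply algebra
  done



lemma dY1: assumes "u \<noteq> 0" "q1 u \<noteq> 0" "qm u \<noteq> 0" "q3 u \<noteq> 0" "ql u \<noteq> 0" "pA u \<noteq> 0"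
  shows "(Y1f has_field_derivative Y1d u) (at u)"
  unfolding Y1f_def[abs_def]
  apply (rule DERIV_cong)
   apply (rule derivative_intros | simp add: assms)+
  apply (unfold Y1d_def)
  apply (simp add: field_simps assms)
  apply (unfold pA_def pB_def pC_def q1_def qm_def q3_def ql_def Q6_def)
  apply algebra
  done



lemma Y1_eq: assumes "u \<noteq> 0" "q1 u \<noteq> 0" "qm u \<noteq> 0" "q3 u \<noteq> 0" "ql u \<noteq> 0" "pA u \<noteq> 0" "pB u \<noteq> 0" "pC u \<noteq> 0"
  shows "YPf u / TPf u = Y1f u"
  unfolding YPf_def TPf_def Y1f_def
  by (simp add: field_simps assms, algebra?)



lemma Ym1_eq: assumes "pA u \<noteq> 0" "pB u \<noteq> 0"
  shows "Ysol u - 1 = (-1) * qm u * q3 u^2 * ql u * pF u / (pA u * pB u^2)"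
  unfolding Ysol_eq
  by (simp add: field_simps assms, unfold pA_def pB_def pE_def pF_def q1_def qm_def q3_def ql_def, algebra)

lemma YmT_eq: assumes "pA u \<noteq> 0" "pB u \<noteq> 0" "pC u \<noteq> 0"
  shows "Ysol u - Tsol u = 32 * u * q1 u * qm u * q3 u^2 * ql u * pH u / (pA u * pB u^3 * pC u)"
  unfolding Ysol_eq Tsol_eq
  by (simp add: field_simps assms, unfold pA_def pB_def pC_def pE_def pH_def q1_def qm_def q3_def ql_def, algebra)



lemma canc: "(d::complex) \<noteq> 0 \<Longrightarrow> L = d * q \<Longrightarrow> n / d * L = n * q"
  by simp

lemma core:
  fixes s p1 m1 p3 l1 a b c e f h y t y1 y2 :: complex
  assumes D: "p1 = s + 1" "m1 = s - 1" "p3 = s + 3" "l1 = 3 * s + 1" "a = s^2 + 2 * s + 5" "b = 3 * s^2 + 2 * s + 3" "c = s^2 + 6 * s + 1" "e = 5 * s^2 + 6 * s - 3" "f = 3 * s^2 - 6 * s - 5" "h = 5 * s^2 + 2 * s + 1"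
  and nz: "s \<noteq> 0" "p1 \<noteq> 0" "m1 \<noteq> 0" "p3 \<noteq> 0" "l1 \<noteq> 0" "a \<noteq> 0" "b \<noteq> 0" "c \<noteq> 0" "e \<noteq> 0" "f \<noteq> 0" "h \<noteq> 0"
  and Y: "y = (32) * s * p1 * e / (a * b^2)"
  and T: "t = (1024) * s^3 * p1^2 / (b^3 * c)"
  and Y1: "y1 = (1/32) * b * c^2 * (15 - 45 * s - 212 * s^2 - 106 * s^3 + 23 * s^4 + 39 * s^5 + 30 * s^6) / (s^2 * p1 * m1 * p3 * l1^2 * a^2)"
  and Y2: "y2 = (-1/16384) * b^4 * c^3 * (675 + 4140 * s + 13335 * s^2 + 20349 * s^3 + 66834 * s^4 + 274698 * s^5 + 537789 * s^6 + 487863 * s^7 + 224330 * s^8 + 92280 * s^9 + 108993 * s^10 + 128763 * s^11 + 93402 * s^12 + 35442 * s^13 + 7179 * s^14 + 945 * s^15 + 135 * s^16) / (s^5 * p1^3 * m1^3 * p3^4 * l1^5 * a^3)"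
  shows "y2 = PVI_rhs (1/2) (1/4) (1/2) (3/4) t y y1"
proof -
  have Ym1: "y - 1 = (-1) * m1 * p3^2 * l1 * f / (a * b^2)"
    unfolding Y by (simp add: field_simps nz, simp only: D, algebra)
  have Tm1: "t - 1 = (-1) * m1^2 * p3^3 * l1^3 / (b^3 * c)"
    unfolding T by (simp add: field_simps nz, simp only: D, algebra)
  have YmT: "y - t = (32) * s * p1 * m1 * p3^2 * l1 * h / (a * b^3 * c)"
    unfolding Y T by (simp add: field_simps nz, simp only: D, algebra)
  have A2: "1/2 * (1/y + 1/(y - 1) + 1/(y - t)) = (1/32) * a * b^2 * c * (45 + 42 * s - 29 * s^2 - 212 * s^3 - 349 * s^4 - 54 * s^5 + 45 * s^6) / (s * p1 * m1 * p3^2 * l1 * e * f * h)"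
    unfolding Ym1 YmT unfolding Y by (simp add: field_simps nz, simp only: D, algebra)
  have A1: "1/t + 1/(t - 1) + 1/(y - t) = (1/1024) * b^3 * c * (27 + 270 * s + 555 * s^2 - 2392 * s^3 - 9290 * s^4 - 14316 * s^5 - 12754 * s^6 - 856 * s^7 + 4431 * s^8 + 1422 * s^9 + 135 * s^10) / (s^3 * p1^2 * m1^2 * p3^3 * l1^3 * h)"
    unfolding Tm1 YmT unfolding T by (simp add: field_simps nz, simp only: D, algebra)
  have KK: "y * (y - 1) * (y - t) / (t^2 * (t - 1)^2) = (-1/1024) * b^5 * c^3 * e * f * h / (s^4 * p1^2 * m1^2 * p3^2 * l1^4 * a^3)"
    unfolding Ym1 YmT Tm1 unfolding Y T by (simp add: field_simps nz, simp only: D, algebra)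
  have MM: "1/32 + (-1/8) * t / y^2 + 1/8 * (t - 1) / (y - 1)^2 + 15/32 * t * (t - 1) / (y - t)^2 = (-1/32) * (2025 + 100890 * s + 271395 * s^2 - 720988 * s^3 - 1885167 * s^4 + 2673734 * s^5 + 9846083 * s^6 + 8969336 * s^7 + 3465139 * s^8 + 380678 * s^9 - 158079 * s^10 + 164 * s^11 + 70227 * s^12 + 40410 * s^13 + 12825 * s^14) / (p3 * e^2 * f^2 * h^2)"
    unfolding Ym1 YmT Tm1 unfolding Y T by (simp add: field_simps nz, simp only: D, algebra)
  have R: "PVI_rhs (1/2) (1/4) (1/2) (3/4) t y y1 = 1/2 * (1/y + 1/(y - 1) + 1/(y - t)) * y1^2 - (1/t + 1/(t - 1) + 1/(y - t)) * y1
     + y * (y - 1) * (y - t) / (t^2 * (t - 1)^2) * (1/32 + (-1/8) * t / y^2 + 1/8 * (t - 1) / (y - 1)^2 + 15/32 * t * (t - 1) / (y - t)^2)"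
    unfolding PVI_rhs_def Let_def by (simp add: power2_eq_square)
  have LNZ: "s^5 * p1^3 * m1^3 * p3^4 * l1^5 * a^4 * e^2 * f^2 * h^2 \<noteq> 0" using nz by simp
  have P0: "y2 * (s^5 * p1^3 * m1^3 * p3^4 * l1^5 * a^4 * e^2 * f^2 * h^2) = ((-1/16384) * b^4 * c^3 * (675 + 4140 * s + 13335 * s^2 + 20349 * s^3 + 66834 * s^4 + 274698 * s^5 + 537789 * s^6 + 487863 * s^7 + 224330 * s^8 + 92280 * s^9 + 108993 * s^10 + 128763 * s^11 + 93402 * s^12 + 35442 * s^13 + 7179 * s^14 + 945 * s^15 + 135 * s^16)) * (a * e^2 * f^2 * h^2)"
    unfolding Y2 by (rule canc, use nz in simp, algebra)
  have P1: "((1/32) * a * b^2 * c * (45 + 42 * s - 29 * s^2 - 212 * s^3 - 349 * s^4 - 54 * s^5 + 45 * s^6) / (s * p1 * m1 * p3^2 * l1 * e * f * h)) * y1^2 * (s^5 * p1^3 * m1^3 * p3^4 * l1^5 * a^4 * e^2 * f^2 * h^2) = ((1/32) * a * b^2 * c * (45 + 42 * s - 29 * s^2 - 212 * s^3 - 349 * s^4 - 54 * s^5 + 45 * s^6)) * ((1/32) * b * c^2 * (15 - 45 * s - 212 * s^2 - 106 * s^3 + 23 * s^4 + 39 * s^5 + 30 * s^6))^2 * (e * f * h)"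
    unfolding Y1 power_divide times_divide_times_eq by (rule canc, use nz in simp, algebra)
  have P2: "((1/1024) * b^3 * c * (27 + 270 * s + 555 * s^2 - 2392 * s^3 - 9290 * s^4 - 14316 * s^5 - 12754 * s^6 - 856 * s^7 + 4431 * s^8 + 1422 * s^9 + 135 * s^10) / (s^3 * p1^2 * m1^2 * p3^3 * l1^3 * h)) * y1 * (s^5 * p1^3 * m1^3 * p3^4 * l1^5 * a^4 * e^2 * f^2 * h^2) = ((1/1024) * b^3 * c * (27 + 270 * s + 555 * s^2 - 2392 * s^3 - 9290 * s^4 - 14316 * s^5 - 12754 * s^6 - 856 * s^7 + 4431 * s^8 + 1422 * s^9 + 135 * s^10)) * ((1/32) * b * c^2 * (15 - 45 * s - 212 * s^2 - 106 * s^3 + 23 * s^4 + 39 * s^5 + 30 * s^6)) * (a^2 * e^2 * f^2 * h)"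
    unfolding Y1 times_divide_times_eq by (rule canc, use nz in simp, algebra)
  have P3: "((-1/1024) * b^5 * c^3 * e * f * h / (s^4 * p1^2 * m1^2 * p3^2 * l1^4 * a^3)) * ((-1/32) * (2025 + 100890 * s + 271395 * s^2 - 720988 * s^3 - 1885167 * s^4 + 2673734 * s^5 + 9846083 * s^6 + 8969336 * s^7 + 3465139 * s^8 + 380678 * s^9 - 158079 * s^10 + 164 * s^11 + 70227 * s^12 + 40410 * s^13 + 12825 * s^14) / (p3 * e^2 * f^2 * h^2)) * (s^5 * p1^3 * m1^3 * p3^4 * l1^5 * a^4 * e^2 * f^2 * h^2) = ((-1/1024) * b^5 * c^3 * e * f * h) * ((-1/32) * (2025 + 100890 * s + 271395 * s^2 - 720988 * s^3 - 1885167 * s^4 + 2673734 * s^5 + 9846083 * s^6 + 8969336 * s^7 + 3465139 * s^8 + 380678 * s^9 - 158079 * s^10 + 164 * s^11 + 70227 * s^12 + 40410 * s^13 + 12825 * s^14)) * (s * p1 * m1 * p3 * l1 * a)"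
    unfolding times_divide_times_eq by (rule canc, use nz in simp, algebra)
  have PP: "((-1/16384) * b^4 * c^3 * (675 + 4140 * s + 13335 * s^2 + 20349 * s^3 + 66834 * s^4 + 274698 * s^5 + 537789 * s^6 + 487863 * s^7 + 224330 * s^8 + 92280 * s^9 + 108993 * s^10 + 128763 * s^11 + 93402 * s^12 + 35442 * s^13 + 7179 * s^14 + 945 * s^15 + 135 * s^16)) * (a * e^2 * f^2 * h^2) = ((1/32) * a * b^2 * c * (45 + 42 * s - 29 * s^2 - 212 * s^3 - 349 * s^4 - 54 * s^5 + 45 * s^6)) * ((1/32) * b * c^2 * (15 - 45 * s - 212 * s^2 - 106 * s^3 + 23 * s^4 + 39 * s^5 + 30 * s^6))^2 * (e * f * h) - ((1/1024) * b^3 * c * (27 + 270 * s + 555 * s^2 - 2392 * s^3 - 9290 * s^4 - 14316 * s^5 - 12754 * s^6 - 856 * s^7 + 4431 * s^8 + 1422 * s^9 + 135 * s^10)) * ((1/32) * b * c^2 * (15 - 45 * s - 212 * s^2 - 106 * s^3 + 23 * s^4 + 39 * s^5 + 30 * s^6)) * (a^2 * e^2 * f^2 * h) + ((-1/1024) * b^5 * c^3 * e * f * h) * ((-1/32) * (2025 + 100890 * s + 271395 * s^2 - 720988 * s^3 - 1885167 * s^4 + 2673734 * s^5 + 9846083 * s^6 + 8969336 * s^7 + 3465139 * s^8 + 380678 * s^9 - 158079 * s^10 + 164 * s^11 + 70227 * s^12 + 40410 * s^13 + 12825 * s^14)) * (s * p1 * m1 * p3 * l1 * a)"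
    by (simp only: D, algebra)
  have "y2 * (s^5 * p1^3 * m1^3 * p3^4 * l1^5 * a^4 * e^2 * f^2 * h^2) = (((1/32) * a * b^2 * c * (45 + 42 * s - 29 * s^2 - 212 * s^3 - 349 * s^4 - 54 * s^5 + 45 * s^6) / (s * p1 * m1 * p3^2 * l1 * e * f * h)) * y1^2 - ((1/1024) * b^3 * c * (27 + 270 * s + 555 * s^2 - 2392 * s^3 - 9290 * s^4 - 14316 * s^5 - 12754 * s^6 - 856 * s^7 + 4431 * s^8 + 1422 * s^9 + 135 * s^10) / (s^3 * p1^2 * m1^2 * p3^3 * l1^3 * h)) * y1 + ((-1/1024) * b^5 * c^3 * e * f * h / (s^4 * p1^2 * m1^2 * p3^2 * l1^4 * a^3)) * ((-1/32) * (2025 + 100890 * s + 271395 * s^2 - 720988 * s^3 - 1885167 * s^4 + 2673734 * s^5 + 9846083 * s^6 + 8969336 * s^7 + 3465139 * s^8 + 380678 * s^9 - 158079 * s^10 + 164 * s^11 + 70227 * s^12 + 40410 * s^13 + 12825 * s^14) / (p3 * e^2 * f^2 * h^2))) * (s^5 * p1^3 * m1^3 * p3^4 * l1^5 * a^4 * e^2 * f^2 * h^2)"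
    unfolding distrib_right left_diff_distrib P0 P1 P2 P3 PP by simp
  hence "y2 = ((1/32) * a * b^2 * c * (45 + 42 * s - 29 * s^2 - 212 * s^3 - 349 * s^4 - 54 * s^5 + 45 * s^6) / (s * p1 * m1 * p3^2 * l1 * e * f * h)) * y1^2 - ((1/1024) * b^3 * c * (27 + 270 * s + 555 * s^2 - 2392 * s^3 - 9290 * s^4 - 14316 * s^5 - 12754 * s^6 - 856 * s^7 + 4431 * s^8 + 1422 * s^9 + 135 * s^10) / (s^3 * p1^2 * m1^2 * p3^3 * l1^3 * h)) * y1 + ((-1/1024) * b^5 * c^3 * e * f * h / (s^4 * p1^2 * m1^2 * p3^2 * l1^4 * a^3)) * ((-1/32) * (2025 + 100890 * s + 271395 * s^2 - 720988 * s^3 - 1885167 * s^4 + 2673734 * s^5 + 9846083 * s^6 + 8969336 * s^7 + 3465139 * s^8 + 380678 * s^9 - 158079 * s^10 + 164 * s^11 + 70227 * s^12 + 40410 * s^13 + 12825 * s^14) / (p3 * e^2 * f^2 * h^2))"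
    using LNZ by simp
  thus ?thesis unfolding R A2 A1 KK MM by simp
qed

theorem mainTheorem9:
  fixes s :: complex
  assumes "(s^2 + 2 * s + 5) * (3 * s^2 + 2 * s + 3) \<noteq> 0"
    and "s^2 + 6 * s + 1 \<noteq> 0"
    and "deriv Tsol s \<noteq> 0"
    and "Tsol s \<noteq> 0" and "Tsol s \<noteq> 1"
    and "Ysol s \<noteq> 0" and "Ysol s \<noteq> 1" and "Ysol s \<noteq> Tsol s"
  shows "PVI_param_holds_at (1/2) (1/4) (1/2) (3/4) Tsol Ysol s"
proof -
  have nA: "pA s \<noteq> 0" and nB: "pB s \<noteq> 0" using assms(1) unfolding pA_def pB_def by auto
  have nC: "pC s \<noteq> 0" using assms(2) unfolding pC_def by auto
  have dTs: "deriv Tsol s = TPf s" using dT[OF nC nB] by (rule DERIV_imp_deriv)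
  have "TPf s \<noteq> 0" using assms(3) dTs by simp
  hence n0: "s \<noteq> 0" and n1: "q1 s \<noteq> 0" and nm: "qm s \<noteq> 0" and n3: "q3 s \<noteq> 0" and nl: "ql s \<noteq> 0"
    unfolding TPf_def by auto
  have nE: "pE s \<noteq> 0"
  proof
    assume "pE s = 0"
    hence "Ysol s = 0" unfolding Ysol_eq by simp
    thus False using assms(6) by simp
  qed
  have nF: "pF s \<noteq> 0"
  proof
    assume "pF s = 0"
    hence "Ysol s - 1 = 0" using Ym1_eq[OF nA nB] by simp
    thus False using assms(7) by simp
  qed
  have nH: "pH s \<noteq> 0"
  proof
    assume "pH s = 0"
    hence "Ysol s - Tsol s = 0" using YmT_eq[OF nA nB nC] by simp
    thus False using assms(8) by simp
  qed
  define U where "U = {u. u * q1 u * qm u * q3 u * ql u * pA u * pB u * pC u \<noteq> 0}"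
  have oU: "open U" unfolding U_def
    by (rule open_Collect_neq, unfold q1_def qm_def q3_def ql_def pA_def pB_def pC_def; intro continuous_intros)
  have sU: "s \<in> U" unfolding U_def using n0 n1 nm n3 nl nA nB nC by simp
  have eqU: "Y1f u = deriv Ysol u / deriv Tsol u" if "u \<in> U" for u
  proof -
    have h: "u \<noteq> 0" "q1 u \<noteq> 0" "qm u \<noteq> 0" "q3 u \<noteq> 0" "ql u \<noteq> 0" "pA u \<noteq> 0" "pB u \<noteq> 0" "pC u \<noteq> 0"
      using that unfolding U_def by auto
    have "deriv Ysol u = YPf u" using dY[OF h(6,7)] by (rule DERIV_imp_deriv)
    moreover have "deriv Tsol u = TPf u" using dT[OF h(8,7)] by (rule DERIV_imp_deriv)
    ultimately show ?thesis using Y1_eq[OF h] by simp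
  qed
  have "((\<lambda>u. deriv Ysol u / deriv Tsol u) has_field_derivative Y1d s) (at s)"
    by (rule has_field_derivative_transform_within_open[OF dY1[OF n0 n1 nm n3 nl nA] oU sU eqU])
  hence d2: "deriv (\<lambda>u. deriv Ysol u / deriv Tsol u) s = Y1d s" by (rule DERIV_imp_deriv)
  have y1s: "deriv Ysol s / deriv Tsol s = Y1f s" using eqU[OF sU] by simp
  have Y2: "Y1d s / TPf s = (-1/16384) * pB s^4 * pC s^3 * (675 + 4140 * s + 13335 * s^2 + 20349 * s^3 + 66834 * s^4 + 274698 * s^5 + 537789 * s^6 + 487863 * s^7 + 224330 * s^8 + 92280 * s^9 + 108993 * s^10 + 128763 * s^11 + 93402 * s^12 + 35442 * s^13 + 7179 * s^14 + 945 * s^15 + 135 * s^16) / (s^5 * q1 s^3 * qm s^3 * q3 s^4 * ql s^5 * pA s^3)"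
    unfolding Y1d_def TPf_def
    by (simp add: field_simps n0 n1 nm n3 nl nA nB nC, algebra?)
  have Ys: "Ysol s = 32 * s * q1 s * pE s / (pA s * pB s^2)" unfolding Ysol_eq by simp
  have Ts: "Tsol s = 1024 * s^3 * q1 s^2 / (pB s^3 * pC s)" unfolding Tsol_eq by (simp add: mult.commute)
  have Y1s: "Y1f s = (1/32) * pB s * pC s^2 * (15 - 45 * s - 212 * s^2 - 106 * s^3 + 23 * s^4 + 39 * s^5 + 30 * s^6) / (s^2 * q1 s * qm s * q3 s * ql s^2 * pA s^2)"
    unfolding Y1f_def Q6_def by simp
  have C: "Y1d s / TPf s = PVI_rhs (1/2) (1/4) (1/2) (3/4) (Tsol s) (Ysol s) (Y1f s)"
    by (rule core[OF q1_def qm_def q3_def ql_def pA_def pB_def pC_def pE_def pF_def pH_def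
          n0 n1 nm n3 nl nA nB nC nE nF nH Ys Ts Y1s Y2])
  have "deriv (\<lambda>u. deriv Ysol u / deriv Tsol u) s / deriv Tsol s = PVI_rhs (1/2) (1/4) (1/2) (3/4) (Tsol s) (Ysol s) (deriv Ysol s / deriv Tsol s)"
    unfolding y1s unfolding d2 unfolding dTs by (rule C)
  thus ?thesis unfolding PVI_param_holds_at_def Let_def .
qed

end
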